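(* Let $\mathbb{X}$ be a basic reverse differential restriction category with countable disjoint joins. Let the following be given: - maps $b_T,b_F:\Gamma\times U\to 1$ such that $\overline{b_T}\,\overline{b_F}$ is nowhere defined; - maps $m,n:\Gamma\times U\to T$; - maps $a:\Gamma\to U$ and $v:\Gamma\to T$. Then $$\langle\langle 1_\Gamma,a\rangle,v\rangle\,R\big[\overline{b_T}\,m\vee\overline{b_F}\,n\big]\,\pi_1 =\overline{\langle 1_\Gamma,a\rangle b_T}\,\langle\langle 1_\Gamma,a\rangle,v\rangle R[m]\pi_1\ \vee\ \overline{\langle 1_\Gamma,a\rangle b_F}\,\langle\langle 1_\Gamma,a\rangle,v\rangle R[n]\pi_1 .$$ In the language SDPL, this is the statement that $$[\![v.\mathrm{rd}(x{:}U.\ \texttt{if } b \texttt{ then } m\texttt{ else } n)(a)]\!]=[\![\texttt{if }(\texttt{let } x=a\texttt{ in } b)\texttt{ then } v.\mathrm{rd}(x{:}U.m)(a)\texttt{ else } v.\mathrm{rd}(x{:}U.n)(a)]\!].$$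
   Context: Composition is written in diagrammatic order: $fg$ means "first $f$, then $g$". A restriction category is a category with an operation sending each $f:A\to B$ to a map $\bar f:A\to A$ such that $\bar f f=f$, $\bar f\bar g=\bar g\bar f$ (for $f,g$ with common domain), $\overline{\bar f g}=\bar f\bar g$, and $f\bar g=\overline{fg}\,f$. A map $f$ is total if $\bar f=1$. For parallel maps: - $f\le g$ means $\bar f g=f$; - a nowhere-defined map $\emptyset$ is a least element for $\le$; - $f,g$ are disjoint if $\bar f g$ is nowhere defined; - the join $\bigvee_i f_i$ of a family is its least upper bound for $\le$. "Countable disjoint joins" means that every countable family of pairwise disjoint parallel maps has a join, and composition preserves such joins on both sides: $h(\bigvee_i f_i)k=\bigvee_i hf_ik$. The category has restriction products if: - there is an object $1$ with a total map $!_A:A\to 1$ for each $A$ such that every $f:A\to1$ equals $\bar f\,!_A$; - for all $A,B$ there is an object $A\times B$ with total maps $\pi_0,\pi_1$ such that for all $f:C\to A$, $g:C\to B$ there is a unique $\langle f,g\rangle$ with $\langle f,g\rangle\pi_0=\bar g f$ and $\langle f,g\rangle\pi_1=\bar f g$. Write $f\times g=\langle\pi_0f,\pi_1g\rangle$. A Cartesian left additive restriction category is a restriction category with restriction products in which every hom-set is a commutative monoid $(+,0)$ such that: - $\overline{f+g}=\bar f\bar g$ and $\bar 0=1$; - $x(f+g)=xf+xg$ and $x0=\bar x 0$; - $(f+g)\pi_i=f\pi_i+g\pi_i$ and $0\pi_i=0$. Write $\iota_0=\langle 1,0\rangle$ and $\iota_1=\langle 0,1\rangle$. A basic reverse differential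 restriction category is a Cartesian left additive restriction category with an operation sending each $f:A\to B$ to $R[f]:A\times B\to A$ satisfying: - [RD.1] $R[f+g]=R[f]+R[g]$ and $R[0]=0$. - [RD.2] $\langle a,b+c\rangle R[f]=\langle a,b\rangle R[f]+\langle a,c\rangle R[f]$ and $\langle a,0\rangle R[f]=\overline{af}\,0$. - [RD.3] $R[\pi_j]=\pi_1\iota_j$. - [RD.4] $R[\langle f,g\rangle]=(1\times\pi_0)R[f]+(1\times\pi_1)R[g]$. - [RD.5] $R[fg]=\langle\pi_0,\langle\pi_0f,\pi_1\rangle R[g]\rangle R[f]$. - [RD.8] $\overline{R[f]}=\bar f\times 1$. - [RD.9] $R[\bar f]=(\bar f\times1)\pi_1$. Semantics of SDPL used in the second formulation: - A predicate $b$ in context $\Gamma,x{:}U$ is interpreted by a pair $(b_T,b_F)$ of maps $\Gamma\times U\to 1$ with disjoint restrictions. - $[\![\texttt{if } b\texttt{ then }m\texttt{ else }n]\!]=\overline{b_T}[\![m]\!]\vee\overline{b_F}[\![n]\!]$. - $[\![\texttt{let } x=a\texttt{ in } b]\!]_H=\langle 1,[\![a]\!]\rangle b_H$ for $H\in\{T,F\}$. - $[\![v.\mathrm{rd}(x.m)(a)]\!]=\langle\langle 1,[\![a]\!]\rangle,[\![v]\!]\rangle R[[\![m]\!]]\pi_1$. *)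

theory Defs
  imports Main "HOL-Library.Countable_Set"
begin

text \<open>A (small) category presented by an object set, an arrow set, domain/codomain,
  diagrammatic composition (Comp f g = "first f, then g"), identities, together with
  the extra structure of a basic reverse differential restriction category.\<close>

record ('o, 'a) rdrc =
  Obj  :: "'o set"
  Arr  :: "'a set"
  Dom  :: "'a \<Rightarrow> 'o"
  Cod  :: "'a \<Rightarrow> 'o"
  Comp :: "'a \<Rightarrow> 'a \<Rightarrow> 'a"
  Id   :: "'o \<Rightarrow> 'a"
  Rst  :: "'a \<Rightarrow> 'a"
  Term :: "'o"
  Bang :: "'o \<Rightarrow> 'a"
  Prod :: "'o \<Rightarrow> 'o \<Rightarrow> 'o"
  P0   :: "'o \<Rightarrow> 'o \<Rightarrow> 'a"
  P1   :: "'o \<Rightarrow> 'o \<Rightarrow> 'a"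
  Pair :: "'a \<Rightarrow> 'a \<Rightarrow> 'a"
  Add  :: "'a \<Rightarrow> 'a \<Rightarrow> 'a"
  Zero :: "'o \<Rightarrow> 'o \<Rightarrow> 'a"
  RD   :: "'a \<Rightarrow> 'a"

definition hom :: "('o,'a,'z) rdrc_scheme \<Rightarrow> 'o \<Rightarrow> 'o \<Rightarrow> 'a set" where
  "hom X A B = {f \<in> Arr X. Dom X f = A \<and> Cod X f = B}"

definition total :: "('o,'a,'z) rdrc_scheme \<Rightarrow> 'a \<Rightarrow> bool" where
  "total X f \<longleftrightarrow> Rst X f = Id X (Dom X f)"

definition rle :: "('o,'a,'z) rdrc_scheme \<Rightarrow> 'a \<Rightarrow> 'a \<Rightarrow> bool" where
  "rle X f g \<longleftrightarrow> f \<in> Arr X \<and> g \<in> Arr X \<and> Dom X f = Dom X g \<and> Cod X f = Cod X g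
                 \<and> Comp X (Rst X f) g = f"

definition nowhere_defined :: "('o,'a,'z) rdrc_scheme \<Rightarrow> 'o \<Rightarrow> 'o \<Rightarrow> 'a \<Rightarrow> bool" where
  "nowhere_defined X A B f \<longleftrightarrow> f \<in> hom X A B \<and> (\<forall>g\<in>hom X A B. rle X f g)"

definition disjoint :: "('o,'a,'z) rdrc_scheme \<Rightarrow> 'a \<Rightarrow> 'a \<Rightarrow> bool" where
  "disjoint X f g \<longleftrightarrow> nowhere_defined X (Dom X f) (Cod X g) (Comp X (Rst X f) g)"

definition is_join :: "('o,'a,'z) rdrc_scheme \<Rightarrow> 'o \<Rightarrow> 'o \<Rightarrow> 'a set \<Rightarrow> 'a \<Rightarrow> bool" where
  "is_join X A B F j \<longleftrightarrow> j \<in> hom X A B \<and> (\<forall>f\<in>F. rle X f j)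
      \<and> (\<forall>g\<in>hom X A B. (\<forall>f\<in>F. rle X f g) \<longrightarrow> rle X j g)"

text \<open>binary join of two parallel maps (the least upper bound, unique when it exists)\<close>
definition join2 :: "('o,'a,'z) rdrc_scheme \<Rightarrow> 'a \<Rightarrow> 'a \<Rightarrow> 'a" where
  "join2 X f g = (THE j. is_join X (Dom X f) (Cod X f) {f, g} j)"

definition ptimes :: "('o,'a,'z) rdrc_scheme \<Rightarrow> 'a \<Rightarrow> 'a \<Rightarrow> 'a" where
  "ptimes X f g = Pair X (Comp X (P0 X (Dom X f) (Dom X g)) f) (Comp X (P1 X (Dom X f) (Dom X g)) g)"

definition iota0 :: "('o,'a,'z) rdrc_scheme \<Rightarrow> 'o \<Rightarrow> 'o \<Rightarrow> 'a" where
  "iota0 X A B = Pair X (Id X A) (Zero X A B)"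

definition iota1 :: "('o,'a,'z) rdrc_scheme \<Rightarrow> 'o \<Rightarrow> 'o \<Rightarrow> 'a" where
  "iota1 X A B = Pair X (Zero X B A) (Id X B)"

definition is_category :: "('o,'a,'z) rdrc_scheme \<Rightarrow> bool" where
  "is_category X \<longleftrightarrow>
     (\<forall>f\<in>Arr X. Dom X f \<in> Obj X \<and> Cod X f \<in> Obj X)
   \<and> (\<forall>A\<in>Obj X. Id X A \<in> hom X A A)
   \<and> (\<forall>A\<in>Obj X. \<forall>B\<in>Obj X. \<forall>C\<in>Obj X. \<forall>f\<in>hom X A B. \<forall>g\<in>hom X B C. Comp X f g \<in> hom X A C)
   \<and> (\<forall>f\<in>Arr X. Comp X (Id X (Dom X f)) f = f \<and> Comp X f (Id X (Cod X f)) = f)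
   \<and> (\<forall>f\<in>Arr X. \<forall>g\<in>Arr X. \<forall>h\<in>Arr X. Cod X f = Dom X g \<longrightarrow> Cod X g = Dom X h \<longrightarrow>
        Comp X (Comp X f g) h = Comp X f (Comp X g h))"

definition is_restriction_category :: "('o,'a,'z) rdrc_scheme \<Rightarrow> bool" where
  "is_restriction_category X \<longleftrightarrow> is_category X
   \<and> (\<forall>f\<in>Arr X. Rst X f \<in> hom X (Dom X f) (Dom X f))
   \<and> (\<forall>f\<in>Arr X. Comp X (Rst X f) f = f)
   \<and> (\<forall>f\<in>Arr X. \<forall>g\<in>Arr X. Dom X f = Dom X g \<longrightarrow>
        Comp X (Rst X f) (Rst X g) = Comp X (Rst X g) (Rst X f))
   \<and> (\<forall>f\<in>Arr X. \<forall>g\<in>Arr X. Dom X f = Dom X g \<longrightarrow>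
        Rst X (Comp X (Rst X f) g) = Comp X (Rst X f) (Rst X g))
   \<and> (\<forall>f\<in>Arr X. \<forall>g\<in>Arr X. Cod X f = Dom X g \<longrightarrow>
        Comp X f (Rst X g) = Comp X (Rst X (Comp X f g)) f)"

definition has_restriction_products :: "('o,'a,'z) rdrc_scheme \<Rightarrow> bool" where
  "has_restriction_products X \<longleftrightarrow>
     Term X \<in> Obj X
   \<and> (\<forall>A\<in>Obj X. Bang X A \<in> hom X A (Term X) \<and> total X (Bang X A)
        \<and> (\<forall>f\<in>hom X A (Term X). f = Comp X (Rst X f) (Bang X A)))
   \<and> (\<forall>A\<in>Obj X. \<forall>B\<in>Obj X. Prod X A B \<in> Obj X
        \<and> P0 X A B \<in> hom X (Prod X A B) A \<and> total X (P0 X A B)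
        \<and> P1 X A B \<in> hom X (Prod X A B) B \<and> total X (P1 X A B)
        \<and> (\<forall>C\<in>Obj X. \<forall>f\<in>hom X C A. \<forall>g\<in>hom X C B.
             Pair X f g \<in> hom X C (Prod X A B)
           \<and> Comp X (Pair X f g) (P0 X A B) = Comp X (Rst X g) f
           \<and> Comp X (Pair X f g) (P1 X A B) = Comp X (Rst X f) g
           \<and> (\<forall>h\<in>hom X C (Prod X A B).
                Comp X h (P0 X A B) = Comp X (Rst X g) f \<and> Comp X h (P1 X A B) = Comp X (Rst X f) g
                \<longrightarrow> h = Pair X f g)))"

definition is_CLARC :: "('o,'a,'z) rdrc_scheme \<Rightarrow> bool" where
  "is_CLARC X \<longleftrightarrow> is_restriction_category X \<and> has_restriction_products X
   \<and> (\<forall>A\<in>Obj X. \<forall>B\<in>Obj X.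
        Zero X A B \<in> hom X A B \<and> Rst X (Zero X A B) = Id X A
      \<and> (\<forall>f\<in>hom X A B. \<forall>g\<in>hom X A B. Add X f g \<in> hom X A B
           \<and> Add X f g = Add X g f
           \<and> Rst X (Add X f g) = Comp X (Rst X f) (Rst X g))
      \<and> (\<forall>f\<in>hom X A B. Add X f (Zero X A B) = f)
      \<and> (\<forall>f\<in>hom X A B. \<forall>g\<in>hom X A B. \<forall>h\<in>hom X A B.
           Add X (Add X f g) h = Add X f (Add X g h)))
   \<and> (\<forall>A\<in>Obj X. \<forall>B\<in>Obj X. \<forall>C\<in>Obj X. \<forall>x\<in>hom X A B.
        (\<forall>f\<in>hom X B C. \<forall>g\<in>hom X B C. Comp X x (Add X f g) = Add X (Comp X x f) (Comp X x g))
      \<and> Comp X x (Zero X B C) = Comp X (Rst X x) (Zero X A C))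
   \<and> (\<forall>A\<in>Obj X. \<forall>B\<in>Obj X. \<forall>C\<in>Obj X.
        (\<forall>f\<in>hom X C (Prod X A B). \<forall>g\<in>hom X C (Prod X A B).
           Comp X (Add X f g) (P0 X A B) = Add X (Comp X f (P0 X A B)) (Comp X g (P0 X A B))
         \<and> Comp X (Add X f g) (P1 X A B) = Add X (Comp X f (P1 X A B)) (Comp X g (P1 X A B)))
      \<and> Comp X (Zero X C (Prod X A B)) (P0 X A B) = Zero X C A
      \<and> Comp X (Zero X C (Prod X A B)) (P1 X A B) = Zero X C B)"

definition is_basic_RDRC :: "('o,'a,'z) rdrc_scheme \<Rightarrow> bool" where
  "is_basic_RDRC X \<longleftrightarrow> is_CLARC X
   \<and> (\<forall>A\<in>Obj X. \<forall>B\<in>Obj X. \<forall>f\<in>hom X A B. RD X f \<in> hom X (Prod X A B) A)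
   \<comment> \<open>RD.1\<close>
   \<and> (\<forall>A\<in>Obj X. \<forall>B\<in>Obj X.
        (\<forall>f\<in>hom X A B. \<forall>g\<in>hom X A B. RD X (Add X f g) = Add X (RD X f) (RD X g))
      \<and> RD X (Zero X A B) = Zero X (Prod X A B) A)
   \<comment> \<open>RD.2\<close>
   \<and> (\<forall>A\<in>Obj X. \<forall>B\<in>Obj X. \<forall>C\<in>Obj X. \<forall>f\<in>hom X A B. \<forall>a\<in>hom X C A.
        (\<forall>b\<in>hom X C B. \<forall>c\<in>hom X C B.
           Comp X (Pair X a (Add X b c)) (RD X f)
             = Add X (Comp X (Pair X a b) (RD X f)) (Comp X (Pair X a c) (RD X f)))
      \<and> Comp X (Pair X a (Zero X C B)) (RD X f) = Comp X (Rst X (Comp X a f)) (Zero X C A))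
   \<comment> \<open>RD.3\<close>
   \<and> (\<forall>A\<in>Obj X. \<forall>B\<in>Obj X.
        RD X (P0 X A B) = Comp X (P1 X (Prod X A B) A) (iota0 X A B)
      \<and> RD X (P1 X A B) = Comp X (P1 X (Prod X A B) B) (iota1 X A B))
   \<comment> \<open>RD.4\<close>
   \<and> (\<forall>A\<in>Obj X. \<forall>B\<in>Obj X. \<forall>C\<in>Obj X. \<forall>f\<in>hom X C A. \<forall>g\<in>hom X C B.
        RD X (Pair X f g) = Add X (Comp X (ptimes X (Id X C) (P0 X A B)) (RD X f))
                                  (Comp X (ptimes X (Id X C) (P1 X A B)) (RD X g)))
   \<comment> \<open>RD.5\<close>
   \<and> (\<forall>A\<in>Obj X. \<forall>B\<in>Obj X. \<forall>C\<in>Obj X. \<forall>f\<in>hom X A B. \<forall>g\<in>hom X B C.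
        RD X (Comp X f g) = Comp X (Pair X (P0 X A C)
              (Comp X (Pair X (Comp X (P0 X A C) f) (P1 X A C)) (RD X g))) (RD X f))
   \<comment> \<open>RD.8 and RD.9\<close>
   \<and> (\<forall>A\<in>Obj X. \<forall>B\<in>Obj X. \<forall>f\<in>hom X A B.
        Rst X (RD X f) = ptimes X (Rst X f) (Id X B)
      \<and> RD X (Rst X f) = Comp X (ptimes X (Rst X f) (Id X A)) (P1 X A A))"

definition has_countable_disjoint_joins :: "('o,'a,'z) rdrc_scheme \<Rightarrow> bool" where
  "has_countable_disjoint_joins X \<longleftrightarrow>
     (\<forall>A\<in>Obj X. \<forall>B\<in>Obj X. \<forall>F. F \<subseteq> hom X A B \<and> countable F
        \<and> (\<forall>f\<in>F. \<forall>g\<in>F. f \<noteq> g \<longrightarrow> disjoint X f g) \<longrightarrow>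
        (\<exists>j. is_join X A B F j)
      \<and> (\<forall>j C D h k. is_join X A B F j \<and> C \<in> Obj X \<and> D \<in> Obj X
           \<and> h \<in> hom X C A \<and> k \<in> hom X B D \<longrightarrow>
           is_join X C D ((\<lambda>f. Comp X (Comp X h f) k) ` F) (Comp X (Comp X h j) k)))"

end

theory Submission
  imports Defs
begin

locale ctx =
  fixes X :: "('o,'a) rdrc"
  assumes B: "is_basic_RDRC X" and J: "has_countable_disjoint_joins X"
begin

abbreviation cmp (infixl "\<cdot>" 75) where "f \<cdot> g \<equiv> Comp X f g"
abbreviation rst where "rst f \<equiv> Rst X f"

lemma isCLARC: "is_CLARC X" using B unfolding is_basic_RDRC_def by blast
lemma isRC: "is_restriction_category X" using isCLARC unfolding is_CLARC_def by blast
lemma isCat: "is_category X" using isRC unfolding is_restriction_category_def by blast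
lemma hasRP: "has_restriction_products X" using isCLARC unfolding is_CLARC_def by blast

lemmas cat_ax = isCat[unfolded is_category_def hom_def mem_Collect_eq]

lemma arr_dom[simp]: "f \<in> Arr X \<Longrightarrow> Dom X f \<in> Obj X"
  using cat_ax[THEN conjunct1] by blast
lemma arr_cod[simp]: "f \<in> Arr X \<Longrightarrow> Cod X f \<in> Obj X"
  using cat_ax[THEN conjunct1] by blast
lemma id_ty[simp]: "A \<in> Obj X \<Longrightarrow> Id X A \<in> Arr X" "A \<in> Obj X \<Longrightarrow> Dom X (Id X A) = A"
  "A \<in> Obj X \<Longrightarrow> Cod X (Id X A) = A"
  using cat_ax[THEN conjunct2, THEN conjunct1] by blast+

lemma comp_hom: "f \<in> Arr X \<Longrightarrow> g \<in> Arr X \<Longrightarrow> Cod X f = Dom X g \<Longrightarrow> f \<cdot> g \<in> hom X (Dom X f) (Cod X g)"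
proof -
  assume a: "f \<in> Arr X" "g \<in> Arr X" "Cod X f = Dom X g"
  have c: "\<forall>A\<in>Obj X. \<forall>B\<in>Obj X. \<forall>C\<in>Obj X. \<forall>f\<in>hom X A B. \<forall>g\<in>hom X B C. Comp X f g \<in> hom X A C"
    using isCat unfolding is_category_def by (elim conjE)
  have "f \<in> hom X (Dom X f) (Cod X f)" "g \<in> hom X (Cod X f) (Cod X g)" using a unfolding hom_def by auto
  then show ?thesis using c a by (meson arr_cod arr_dom)
qed

lemma comp_ty[simp]:
  "f \<in> Arr X \<Longrightarrow> g \<in> Arr X \<Longrightarrow> Cod X f = Dom X g \<Longrightarrow> f \<cdot> g \<in> Arr X"
  "f \<in> Arr X \<Longrightarrow> g \<in> Arr X \<Longrightarrow> Cod X f = Dom X g \<Longrightarrow> Dom X (f \<cdot> g) = Dom X f"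
  "f \<in> Arr X \<Longrightarrow> g \<in> Arr X \<Longrightarrow> Cod X f = Dom X g \<Longrightarrow> Cod X (f \<cdot> g) = Cod X g"
  using comp_hom unfolding hom_def by blast+

lemma idl: "f \<in> Arr X \<Longrightarrow> Dom X f = A \<Longrightarrow> Id X A \<cdot> f = f"
  using cat_ax[THEN conjunct2, THEN conjunct2, THEN conjunct2, THEN conjunct1] by blast
lemma idr: "f \<in> Arr X \<Longrightarrow> Cod X f = A \<Longrightarrow> f \<cdot> Id X A = f"
  using cat_ax[THEN conjunct2, THEN conjunct2, THEN conjunct2, THEN conjunct1] by blast
lemma assoc: "f \<in> Arr X \<Longrightarrow> g \<in> Arr X \<Longrightarrow> h \<in> Arr X \<Longrightarrow> Cod X f = Dom X g \<Longrightarrow> Cod X g = Dom X h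
   \<Longrightarrow> f \<cdot> g \<cdot> h = f \<cdot> (g \<cdot> h)"
  using cat_ax[THEN conjunct2, THEN conjunct2, THEN conjunct2, THEN conjunct2] by blast

lemmas rc_ax = isRC[unfolded is_restriction_category_def hom_def mem_Collect_eq]

lemma rst_ty[simp]: "f \<in> Arr X \<Longrightarrow> rst f \<in> Arr X" "f \<in> Arr X \<Longrightarrow> Dom X (rst f) = Dom X f"
  "f \<in> Arr X \<Longrightarrow> Cod X (rst f) = Dom X f"
  using rc_ax[THEN conjunct2, THEN conjunct1] by blast+
lemma R1: "f \<in> Arr X \<Longrightarrow> rst f \<cdot> f = f"
  using rc_ax[THEN conjunct2, THEN conjunct2, THEN conjunct1] by blast
lemma R2: "f \<in> Arr X \<Longrightarrow> g \<in> Arr X \<Longrightarrow> Dom X f = Dom X g \<Longrightarrow> rst f \<cdot> rst g = rst g \<cdot> rst f"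
  using rc_ax[THEN conjunct2, THEN conjunct2, THEN conjunct2, THEN conjunct1] by blast
lemma R3: "f \<in> Arr X \<Longrightarrow> g \<in> Arr X \<Longrightarrow> Dom X f = Dom X g \<Longrightarrow> rst (rst f \<cdot> g) = rst f \<cdot> rst g"
  using rc_ax[THEN conjunct2, THEN conjunct2, THEN conjunct2, THEN conjunct2, THEN conjunct1] by blast
lemma R4: "f \<in> Arr X \<Longrightarrow> g \<in> Arr X \<Longrightarrow> Cod X f = Dom X g \<Longrightarrow> f \<cdot> rst g = rst (f \<cdot> g) \<cdot> f"
  using rc_ax[THEN conjunct2, THEN conjunct2, THEN conjunct2, THEN conjunct2, THEN conjunct2] by blast

lemma rst_id: "A \<in> Obj X \<Longrightarrow> rst (Id X A) = Id X A"
proof -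
  assume A: "A \<in> Obj X"
  have "rst (Id X A) \<cdot> Id X A = Id X A" using A R1 by simp
  moreover have "rst (Id X A) \<cdot> Id X A = rst (Id X A)" using A by (simp add: idr)
  ultimately show ?thesis by simp
qed
lemma rst_rst[simp]: "f \<in> Arr X \<Longrightarrow> rst (rst f) = rst f"
proof -
  assume f: "f \<in> Arr X"
  have "rst (rst f \<cdot> Id X (Dom X f)) = rst f \<cdot> rst (Id X (Dom X f))" using f by (simp add: R3)
  then show ?thesis using f by (simp add: rst_id idr)
qed
lemma rst_idem: "f \<in> Arr X \<Longrightarrow> rst f \<cdot> rst f = rst f"
  using R1[of "rst f"] by simp
lemma rst_comp_rst: "f \<in> Arr X \<Longrightarrow> g \<in> Arr X \<Longrightarrow> Cod X f = Dom X g \<Longrightarrow> rst (f \<cdot> rst g) = rst (f \<cdot> g)"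
proof -
  assume a: "f \<in> Arr X" "g \<in> Arr X" "Cod X f = Dom X g"
  have "rst (f \<cdot> rst g) = rst (rst (f \<cdot> g) \<cdot> f)" using a by (simp add: R4)
  also have "\<dots> = rst (f \<cdot> g) \<cdot> rst f" using a by (simp add: R3)
  also have "\<dots> = rst f \<cdot> rst (f \<cdot> g)" using a by (simp add: R2)
  also have "\<dots> = rst (rst f \<cdot> (f \<cdot> g))" using a by (simp add: R3)
  also have "\<dots> = rst (f \<cdot> g)" using a assoc[of "rst f" f g] R1[of f] by simp
  finally show ?thesis .
qed

lemma rp: "\<forall>A\<in>Obj X. \<forall>B\<in>Obj X. Prod X A B \<in> Obj X
        \<and> P0 X A B \<in> hom X (Prod X A B) A \<and> total X (P0 X A B)
        \<and> P1 X A B \<in> hom X (Prod X A B) B \<and> total X (P1 X A B)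
        \<and> (\<forall>C\<in>Obj X. \<forall>f\<in>hom X C A. \<forall>g\<in>hom X C B.
             Pair X f g \<in> hom X C (Prod X A B)
           \<and> Comp X (Pair X f g) (P0 X A B) = Comp X (Rst X g) f
           \<and> Comp X (Pair X f g) (P1 X A B) = Comp X (Rst X f) g
           \<and> (\<forall>h\<in>hom X C (Prod X A B).
                Comp X h (P0 X A B) = Comp X (Rst X g) f \<and> Comp X h (P1 X A B) = Comp X (Rst X f) g
                \<longrightarrow> h = Pair X f g))"
  using hasRP unfolding has_restriction_products_def by blast
lemma term_obj[simp]: "Term X \<in> Obj X"
  using hasRP unfolding has_restriction_products_def by blast

lemma prod_ty[simp]:
  "A \<in> Obj X \<Longrightarrow> B \<in> Obj X \<Longrightarrow> Prod X A B \<in> Obj X"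
  "A \<in> Obj X \<Longrightarrow> B \<in> Obj X \<Longrightarrow> P0 X A B \<in> Arr X"
  "A \<in> Obj X \<Longrightarrow> B \<in> Obj X \<Longrightarrow> Dom X (P0 X A B) = Prod X A B"
  "A \<in> Obj X \<Longrightarrow> B \<in> Obj X \<Longrightarrow> Cod X (P0 X A B) = A"
  "A \<in> Obj X \<Longrightarrow> B \<in> Obj X \<Longrightarrow> P1 X A B \<in> Arr X"
  "A \<in> Obj X \<Longrightarrow> B \<in> Obj X \<Longrightarrow> Dom X (P1 X A B) = Prod X A B"
  "A \<in> Obj X \<Longrightarrow> B \<in> Obj X \<Longrightarrow> Cod X (P1 X A B) = B"
  "A \<in> Obj X \<Longrightarrow> B \<in> Obj X \<Longrightarrow> rst (P0 X A B) = Id X (Prod X A B)"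
  "A \<in> Obj X \<Longrightarrow> B \<in> Obj X \<Longrightarrow> rst (P1 X A B) = Id X (Prod X A B)"
  using rp unfolding hom_def total_def by auto

lemma pair_all:
  assumes "f \<in> Arr X" "g \<in> Arr X" "Dom X f = Dom X g"
  shows "Pair X f g \<in> hom X (Dom X f) (Prod X (Cod X f) (Cod X g))
           \<and> Comp X (Pair X f g) (P0 X (Cod X f) (Cod X g)) = Comp X (Rst X g) f
           \<and> Comp X (Pair X f g) (P1 X (Cod X f) (Cod X g)) = Comp X (Rst X f) g
           \<and> (\<forall>h\<in>hom X (Dom X f) (Prod X (Cod X f) (Cod X g)).
                Comp X h (P0 X (Cod X f) (Cod X g)) = Comp X (Rst X g) f \<and> Comp X h (P1 X (Cod X f) (Cod X g)) = Comp X (Rst X f) g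
                \<longrightarrow> h = Pair X f g)"
proof -
  have "f \<in> hom X (Dom X f) (Cod X f)" "g \<in> hom X (Dom X f) (Cod X g)" using assms unfolding hom_def by auto
  then show ?thesis using rp[rule_format, OF arr_cod[OF assms(1)] arr_cod[OF assms(2)], THEN conjunct2,
     THEN conjunct2, THEN conjunct2, THEN conjunct2, THEN conjunct2, rule_format, OF arr_dom[OF assms(1)]]
    by blast
qed

lemma pair_ty[simp]:
  "f \<in> Arr X \<Longrightarrow> g \<in> Arr X \<Longrightarrow> Dom X f = Dom X g \<Longrightarrow> Pair X f g \<in> Arr X"
  "f \<in> Arr X \<Longrightarrow> g \<in> Arr X \<Longrightarrow> Dom X f = Dom X g \<Longrightarrow> Dom X (Pair X f g) = Dom X f"
  "f \<in> Arr X \<Longrightarrow> g \<in> Arr X \<Longrightarrow> Dom X f = Dom X g \<Longrightarrow> Cod X (Pair X f g) = Prod X (Cod X f) (Cod X g)"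
  using pair_all unfolding hom_def by blast+

lemma pair_p0: "f \<in> Arr X \<Longrightarrow> g \<in> Arr X \<Longrightarrow> Dom X f = Dom X g \<Longrightarrow> A = Cod X f \<Longrightarrow> B = Cod X g \<Longrightarrow>
   Pair X f g \<cdot> P0 X A B = rst g \<cdot> f"
  using pair_all by blast
lemma pair_p1: "f \<in> Arr X \<Longrightarrow> g \<in> Arr X \<Longrightarrow> Dom X f = Dom X g \<Longrightarrow> A = Cod X f \<Longrightarrow> B = Cod X g \<Longrightarrow>
   Pair X f g \<cdot> P1 X A B = rst f \<cdot> g"
  using pair_all by blast
lemma pair_uniq: "f \<in> Arr X \<Longrightarrow> g \<in> Arr X \<Longrightarrow> Dom X f = Dom X g \<Longrightarrow> h \<in> Arr X \<Longrightarrow> Dom X h = Dom X f \<Longrightarrow>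
   Cod X h = Prod X (Cod X f) (Cod X g) \<Longrightarrow>
   h \<cdot> P0 X (Cod X f) (Cod X g) = rst g \<cdot> f \<Longrightarrow> h \<cdot> P1 X (Cod X f) (Cod X g) = rst f \<cdot> g \<Longrightarrow> h = Pair X f g"
  using pair_all unfolding hom_def by blast

lemma rst_pair: "f \<in> Arr X \<Longrightarrow> g \<in> Arr X \<Longrightarrow> Dom X f = Dom X g \<Longrightarrow> rst (Pair X f g) = rst f \<cdot> rst g"
proof -
  assume a: "f \<in> Arr X" "g \<in> Arr X" "Dom X f = Dom X g"
  let ?p = "P0 X (Cod X f) (Cod X g)"
  have "rst (Pair X f g \<cdot> rst ?p) = rst (Pair X f g)" using a by (simp add: idr)
  also have "rst (Pair X f g \<cdot> rst ?p) = rst (Pair X f g \<cdot> ?p)" using a rst_comp_rst[of "Pair X f g" ?p] by simp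
  also have "\<dots> = rst (rst g \<cdot> f)" using a by (simp add: pair_p0)
  also have "\<dots> = rst g \<cdot> rst f" using a by (simp add: R3)
  finally show ?thesis using a by (simp add: R2)
qed

lemma rd_clause_ty: "\<forall>A\<in>Obj X. \<forall>B\<in>Obj X. \<forall>f\<in>hom X A B. RD X f \<in> hom X (Prod X A B) A"
  using B[unfolded is_basic_RDRC_def, THEN conjunct2, THEN conjunct1] .
lemma rd_clause5: "\<forall>A\<in>Obj X. \<forall>B\<in>Obj X. \<forall>C\<in>Obj X. \<forall>f\<in>hom X A B. \<forall>g\<in>hom X B C.
        RD X (Comp X f g) = Comp X (Pair X (P0 X A C)
              (Comp X (Pair X (Comp X (P0 X A C) f) (P1 X A C)) (RD X g))) (RD X f)"
  using B unfolding is_basic_RDRC_def by blast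
lemma rd_clause9: "\<forall>A\<in>Obj X. \<forall>B\<in>Obj X. \<forall>f\<in>hom X A B.
        Rst X (RD X f) = ptimes X (Rst X f) (Id X B)
      \<and> RD X (Rst X f) = Comp X (ptimes X (Rst X f) (Id X A)) (P1 X A A)"
  using B unfolding is_basic_RDRC_def by blast

lemma rd_ty[simp]: "f \<in> Arr X \<Longrightarrow> RD X f \<in> Arr X" "f \<in> Arr X \<Longrightarrow> Dom X (RD X f) = Prod X (Dom X f) (Cod X f)"
  "f \<in> Arr X \<Longrightarrow> Cod X (RD X f) = Dom X f"
  using rd_clause_ty arr_dom arr_cod unfolding hom_def by blast+

lemma RD5: "f \<in> Arr X \<Longrightarrow> g \<in> Arr X \<Longrightarrow> Cod X f = Dom X g \<Longrightarrow>
  RD X (f \<cdot> g) = Pair X (P0 X (Dom X f) (Cod X g)) (Pair X (P0 X (Dom X f) (Cod X g) \<cdot> f) (P1 X (Dom X f) (Cod X g)) \<cdot> RD X g) \<cdot> RD X f"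
proof -
  assume a: "f \<in> Arr X" "g \<in> Arr X" "Cod X f = Dom X g"
  have "f \<in> hom X (Dom X f) (Cod X f)" "g \<in> hom X (Cod X f) (Cod X g)" using a unfolding hom_def by auto
  then show ?thesis using rd_clause5 a by (meson arr_cod arr_dom)
qed

lemma RD9: "f \<in> Arr X \<Longrightarrow> RD X (rst f) = ptimes X (rst f) (Id X (Dom X f)) \<cdot> P1 X (Dom X f) (Dom X f)"
proof -
  assume a: "f \<in> Arr X"
  have "f \<in> hom X (Dom X f) (Cod X f)" using a unfolding hom_def by auto
  then show ?thesis using rd_clause9 a by (meson arr_cod arr_dom)
qed

lemma RD_rst_comp:
  assumes c: "c \<in> Arr X" and f: "f \<in> Arr X" "Dom X c = Dom X f"
  shows "RD X (rst c \<cdot> f) = rst (P0 X (Dom X f) (Cod X f) \<cdot> c) \<cdot> RD X f"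
proof -
  let ?A = "Dom X f" and ?T = "Cod X f"
  let ?\<pi>0 = "P0 X ?A ?T" and ?\<pi>1 = "P1 X ?A ?T" and ?p0 = "P0 X ?A ?A" and ?p1 = "P1 X ?A ?A"
  let ?cb = "rst c"
  let ?Y = "Pair X (?\<pi>0 \<cdot> ?cb) ?\<pi>1 \<cdot> RD X f"
  have Y: "?Y \<in> Arr X" "Dom X ?Y = Prod X ?A ?T" "Cod X ?Y = ?A" using c f by simp_all
  have 1: "RD X (?cb \<cdot> f) = Pair X ?\<pi>0 ?Y \<cdot> RD X ?cb" using RD5[of ?cb f] c f by simp
  have 2: "RD X ?cb = Pair X (?p0 \<cdot> ?cb) ?p1 \<cdot> ?p1" using RD9[of c] c f by (simp add: ptimes_def idr)
  have 3: "Pair X (?p0 \<cdot> ?cb) ?p1 \<cdot> ?p1 = rst (?p0 \<cdot> ?cb) \<cdot> ?p1" using c f by (simp add: pair_p1)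
  have 4: "Pair X ?\<pi>0 ?Y \<cdot> (rst (?p0 \<cdot> ?cb) \<cdot> ?p1) = rst (?\<pi>0 \<cdot> ?cb) \<cdot> ?Y"
  proof -
    have "Pair X ?\<pi>0 ?Y \<cdot> (rst (?p0 \<cdot> ?cb) \<cdot> ?p1) = (Pair X ?\<pi>0 ?Y \<cdot> rst (?p0 \<cdot> ?cb)) \<cdot> ?p1"
      using c f Y by (simp add: assoc)
    also have "\<dots> = (rst (Pair X ?\<pi>0 ?Y \<cdot> (?p0 \<cdot> ?cb)) \<cdot> Pair X ?\<pi>0 ?Y) \<cdot> ?p1"
      using c f Y by (simp add: R4)
    also have "\<dots> = rst ((Pair X ?\<pi>0 ?Y \<cdot> ?p0) \<cdot> ?cb) \<cdot> (Pair X ?\<pi>0 ?Y \<cdot> ?p1)"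
      using c f Y by (simp add: assoc)
    also have "\<dots> = rst (rst ?Y \<cdot> ?\<pi>0 \<cdot> ?cb) \<cdot> (rst ?\<pi>0 \<cdot> ?Y)"
      using c f Y by (simp add: pair_p0 pair_p1)
    also have "\<dots> = rst (rst ?Y \<cdot> (?\<pi>0 \<cdot> ?cb)) \<cdot> ?Y"
      using c f Y by (simp add: assoc idl)
    also have "\<dots> = rst ?Y \<cdot> rst (?\<pi>0 \<cdot> ?cb) \<cdot> ?Y"
      using c f Y by (simp add: R3)
    also have "\<dots> = rst (?\<pi>0 \<cdot> ?cb) \<cdot> rst ?Y \<cdot> ?Y"
      using c f Y R2[of ?Y "?\<pi>0 \<cdot> ?cb"] by simp
    also have "\<dots> = rst (?\<pi>0 \<cdot> ?cb) \<cdot> ?Y"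
      using c f Y by (simp add: assoc R1)
    finally show ?thesis .
  qed
  have 5: "Pair X (?\<pi>0 \<cdot> ?cb) ?\<pi>1 = rst (?\<pi>0 \<cdot> ?cb)"
  proof (rule sym, rule pair_uniq)
    show "rst (?\<pi>0 \<cdot> ?cb) \<cdot> P0 X (Cod X (?\<pi>0 \<cdot> ?cb)) (Cod X ?\<pi>1) = rst ?\<pi>1 \<cdot> (?\<pi>0 \<cdot> ?cb)"
      using c f R4[of ?\<pi>0 ?cb] by (simp add: idl)
    show "rst (?\<pi>0 \<cdot> ?cb) \<cdot> P1 X (Cod X (?\<pi>0 \<cdot> ?cb)) (Cod X ?\<pi>1) = rst (?\<pi>0 \<cdot> ?cb) \<cdot> ?\<pi>1"
      using c f by simp
  qed (use c f in simp_all)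
  have "RD X (?cb \<cdot> f) = rst (?\<pi>0 \<cdot> ?cb) \<cdot> ?Y" using 1 2 3 4 by simp
  also have "\<dots> = rst (?\<pi>0 \<cdot> ?cb) \<cdot> (rst (?\<pi>0 \<cdot> ?cb) \<cdot> RD X f)" using 5 by simp
  also have "\<dots> = rst (?\<pi>0 \<cdot> ?cb) \<cdot> RD X f" using c f by (simp add: assoc[symmetric] rst_idem)
  also have "rst (?\<pi>0 \<cdot> ?cb) = rst (?\<pi>0 \<cdot> c)" using c f by (simp add: rst_comp_rst)
  finally show ?thesis .
qed

lemma rstv_pair: "s \<in> Arr X \<Longrightarrow> v \<in> Arr X \<Longrightarrow> Dom X s = Dom X v \<Longrightarrow> rst v \<cdot> Pair X s v = Pair X s v"
proof -
  assume a: "s \<in> Arr X" "v \<in> Arr X" "Dom X s = Dom X v"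
  have p: "Pair X s v = rst s \<cdot> rst v \<cdot> Pair X s v" using a R1[of "Pair X s v"] by (simp add: rst_pair)
  have "rst v \<cdot> (rst s \<cdot> rst v) = rst s \<cdot> rst v"
  proof -
    have "rst v \<cdot> (rst s \<cdot> rst v) = rst v \<cdot> rst s \<cdot> rst v" using a by (simp add: assoc)
    also have "\<dots> = rst s \<cdot> rst v \<cdot> rst v" using a R2[of v s] by simp
    also have "\<dots> = rst s \<cdot> rst v" using a by (simp add: assoc rst_idem)
    finally show ?thesis .
  qed
  then have "rst v \<cdot> (rst s \<cdot> rst v \<cdot> Pair X s v) = rst s \<cdot> rst v \<cdot> Pair X s v"
    using a assoc[of "rst v" "rst s \<cdot> rst v" "Pair X s v"] by simp
  then show ?thesis using p by simp
qed

lemma e_RD_rst: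
  assumes s: "s \<in> Arr X" and v: "v \<in> Arr X" "Dom X s = Dom X v"
    and c: "c \<in> Arr X" "Dom X c = Cod X s" and f: "f \<in> Arr X" "Dom X f = Cod X s" "Cod X f = Cod X v"
  shows "Pair X s v \<cdot> RD X (rst c \<cdot> f) = rst (s \<cdot> c) \<cdot> (Pair X s v \<cdot> RD X f)"
proof -
  let ?e = "Pair X s v" and ?\<pi>0 = "P0 X (Cod X s) (Cod X v)"
  have "?e \<cdot> RD X (rst c \<cdot> f) = ?e \<cdot> (rst (?\<pi>0 \<cdot> c) \<cdot> RD X f)"
    using RD_rst_comp[of c f] s v c f by simp
  also have "\<dots> = (?e \<cdot> rst (?\<pi>0 \<cdot> c)) \<cdot> RD X f" using s v c f by (simp add: assoc)
  also have "\<dots> = rst (?e \<cdot> (?\<pi>0 \<cdot> c)) \<cdot> ?e \<cdot> RD X f" using s v c f by (simp add: R4)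
  also have "rst (?e \<cdot> (?\<pi>0 \<cdot> c)) = rst v \<cdot> rst (s \<cdot> c)"
  proof -
    have "rst (?e \<cdot> (?\<pi>0 \<cdot> c)) = rst (?e \<cdot> ?\<pi>0 \<cdot> c)" using s v c f by (simp add: assoc)
    also have "\<dots> = rst (rst v \<cdot> s \<cdot> c)" using s v c f by (simp add: pair_p0)
    also have "\<dots> = rst (rst v \<cdot> (s \<cdot> c))" using s v c f by (simp add: assoc)
    also have "\<dots> = rst v \<cdot> rst (s \<cdot> c)" using s v c f by (simp add: R3)
    finally show ?thesis .
  qed
  also have "rst v \<cdot> rst (s \<cdot> c) = rst (s \<cdot> c) \<cdot> rst v" using s v c f R2[of v "s \<cdot> c"] by simp
  also have "rst (s \<cdot> c) \<cdot> rst v \<cdot> ?e \<cdot> RD X f = rst (s \<cdot> c) \<cdot> (rst v \<cdot> ?e) \<cdot> RD X f"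
    using s v c f by (simp add: assoc)
  also have "\<dots> = rst (s \<cdot> c) \<cdot> (?e \<cdot> RD X f)" using s v c f by (simp add: rstv_pair assoc)
  finally show ?thesis .
qed

lemma rle_antisym: "rle X f g \<Longrightarrow> rle X g f \<Longrightarrow> f = g"
proof -
  assume a: "rle X f g" "rle X g f"
  then have f: "f \<in> Arr X" "g \<in> Arr X" "Dom X f = Dom X g" "Cod X f = Cod X g"
    and e1: "rst f \<cdot> g = f" and e2: "rst g \<cdot> f = g" unfolding rle_def by auto
  have "f = rst f \<cdot> (rst g \<cdot> f)" using e1 e2 by simp
  also have "\<dots> = rst f \<cdot> rst g \<cdot> f" using f by (simp add: assoc)
  also have "\<dots> = rst g \<cdot> rst f \<cdot> f" using f by (simp add: R2)
  also have "\<dots> = rst g \<cdot> f" using f by (simp add: assoc R1)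
  finally show ?thesis using e2 by simp
qed

lemma join_le: "is_join X A B F j1 \<Longrightarrow> is_join X A B F j2 \<Longrightarrow> rle X j1 j2"
proof -
  assume a: "is_join X A B F j1" and b: "is_join X A B F j2"
  have "j2 \<in> hom X A B" "\<forall>f\<in>F. rle X f j2" using b unfolding is_join_def by auto
  moreover have "\<forall>g\<in>hom X A B. (\<forall>f\<in>F. rle X f g) \<longrightarrow> rle X j1 g" using a unfolding is_join_def by auto
  ultimately show ?thesis by auto
qed
lemma join_unique: "is_join X A B F j1 \<Longrightarrow> is_join X A B F j2 \<Longrightarrow> j1 = j2"
  using join_le rle_antisym by metis

lemma join2_eq: "is_join X (Dom X f) (Cod X f) {f, g} j \<Longrightarrow> join2 X f g = j"
  unfolding join2_def by (rule the_equality, assumption, rule join_unique)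

definition pw where "pw F \<longleftrightarrow> (\<forall>f\<in>F. \<forall>g\<in>F. f \<noteq> g \<longrightarrow> disjoint X f g)"

lemma jx: "A \<in> Obj X \<Longrightarrow> B \<in> Obj X \<Longrightarrow> F \<subseteq> hom X A B \<and> countable F \<and> pw F \<Longrightarrow>
        (\<exists>j. is_join X A B F j)
      \<and> (\<forall>j C D h k. is_join X A B F j \<and> C \<in> Obj X \<and> D \<in> Obj X
           \<and> h \<in> hom X C A \<and> k \<in> hom X B D \<longrightarrow>
           is_join X C D ((\<lambda>f. Comp X (Comp X h f) k) ` F) (Comp X (Comp X h j) k))"
  using J unfolding has_countable_disjoint_joins_def pw_def by simp

lemma join_ex: "A \<in> Obj X \<Longrightarrow> B \<in> Obj X \<Longrightarrow> F \<subseteq> hom X A B \<Longrightarrow> countable F \<Longrightarrow> pw F \<Longrightarrow> \<exists>j. is_join X A B F j"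
  using jx by simp
lemma join_pres: "A \<in> Obj X \<Longrightarrow> B \<in> Obj X \<Longrightarrow> F \<subseteq> hom X A B \<Longrightarrow> countable F \<Longrightarrow> pw F \<Longrightarrow>
  is_join X A B F j \<Longrightarrow> h \<in> hom X C A \<Longrightarrow> k \<in> hom X B D \<Longrightarrow>
  is_join X C D ((\<lambda>f. h \<cdot> f \<cdot> k) ` F) (h \<cdot> j \<cdot> k)"
proof -
  assume a: "A \<in> Obj X" "B \<in> Obj X" "F \<subseteq> hom X A B" "countable F" "pw F" "is_join X A B F j"
    "h \<in> hom X C A" "k \<in> hom X B D"
  then have "C \<in> Obj X" "D \<in> Obj X" unfolding hom_def by auto
  moreover have "\<forall>j C D h k. is_join X A B F j \<and> C \<in> Obj X \<and> D \<in> Obj X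
           \<and> h \<in> hom X C A \<and> k \<in> hom X B D \<longrightarrow>
           is_join X C D ((\<lambda>f. Comp X (Comp X h f) k) ` F) (Comp X (Comp X h j) k)"
    using jx[OF a(1,2)] a(3-5) by simp
  ultimately show ?thesis using a by simp
qed

lemma nd_join: "nowhere_defined X A B z \<longleftrightarrow> is_join X A B {} z"
  unfolding nowhere_defined_def is_join_def by auto

lemma nd_ex: "A \<in> Obj X \<Longrightarrow> B \<in> Obj X \<Longrightarrow> \<exists>z. nowhere_defined X A B z"
  unfolding nd_join by (rule join_ex) (auto simp: pw_def)

lemma nd_comp: "nowhere_defined X A B z \<Longrightarrow> h \<in> hom X C A \<Longrightarrow> k \<in> hom X B D \<Longrightarrow>
   nowhere_defined X C D (h \<cdot> z \<cdot> k)"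
proof -
  assume a: "nowhere_defined X A B z" "h \<in> hom X C A" "k \<in> hom X B D"
  then have "A \<in> Obj X" "B \<in> Obj X" unfolding hom_def by auto
  have "is_join X C D ((\<lambda>f. h \<cdot> f \<cdot> k) ` {}) (h \<cdot> z \<cdot> k)"
    by (rule join_pres) (use a \<open>A \<in> Obj X\<close> \<open>B \<in> Obj X\<close> in \<open>auto simp: pw_def nd_join\<close>)
  then show ?thesis unfolding nd_join by simp
qed

lemma nd_unique: "nowhere_defined X A B z1 \<Longrightarrow> nowhere_defined X A B z2 \<Longrightarrow> z1 = z2"
  unfolding nd_join by (rule join_unique)

lemma nd_hom: "nowhere_defined X A B z \<Longrightarrow> z \<in> Arr X \<and> Dom X z = A \<and> Cod X z = B"
  unfolding nowhere_defined_def hom_def by auto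

lemma nd_rst: "nowhere_defined X A B z \<Longrightarrow> nowhere_defined X A A (rst z)"
proof -
  assume z: "nowhere_defined X A B z"
  have zt: "z \<in> Arr X" "Dom X z = A" "Cod X z = B" using nd_hom[OF z] by auto
  then have AB: "A \<in> Obj X" "B \<in> Obj X" by auto
  obtain z0 where z0: "nowhere_defined X A A z0" using nd_ex AB by blast
  have z0t: "z0 \<in> Arr X" "Dom X z0 = A" "Cod X z0 = A" using nd_hom[OF z0] by auto
  have "nowhere_defined X A B (Id X A \<cdot> z0 \<cdot> z)"
    using nd_comp[OF z0, of "Id X A" A z B] AB zt unfolding hom_def by simp
  then have "nowhere_defined X A B (z0 \<cdot> z)" using AB z0t by (simp add: idl)
  then have zz: "z = z0 \<cdot> z" using nd_unique z by blast
  have "rle X z0 (rst z0)" using z0 z0t unfolding nowhere_defined_def hom_def by auto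
  then have r0: "rst z0 = z0" unfolding rle_def using rst_idem z0t by auto
  have "rst z = rst (rst z0 \<cdot> z)" using zz r0 by simp
  also have "\<dots> = z0 \<cdot> rst z" using R3[of z0 z] z0t zt r0 by simp
  also have "\<dots> = Id X A \<cdot> z0 \<cdot> rst z" using z0t AB by (simp add: idl)
  finally have "rst z = Id X A \<cdot> z0 \<cdot> rst z" .
  moreover have "nowhere_defined X A A (Id X A \<cdot> z0 \<cdot> rst z)"
    using nd_comp[OF z0, of "Id X A" A "rst z" A] AB zt unfolding hom_def by simp
  ultimately show ?thesis by simp
qed

lemma disj_of_nd: "f \<in> Arr X \<Longrightarrow> g \<in> Arr X \<Longrightarrow> Dom X f = Dom X g \<Longrightarrow>
   nowhere_defined X (Dom X f) (Dom X f) (rst f \<cdot> rst g) \<Longrightarrow> disjoint X f g"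
proof -
  assume a: "f \<in> Arr X" "g \<in> Arr X" "Dom X f = Dom X g" and z: "nowhere_defined X (Dom X f) (Dom X f) (rst f \<cdot> rst g)"
  have "nowhere_defined X (Dom X f) (Cod X g) (Id X (Dom X f) \<cdot> (rst f \<cdot> rst g) \<cdot> g)"
    using nd_comp[OF z, of "Id X (Dom X f)" "Dom X f" g "Cod X g"] a unfolding hom_def by simp
  moreover have "Id X (Dom X f) \<cdot> (rst f \<cdot> rst g) \<cdot> g = rst f \<cdot> g"
    using a by (simp add: idl assoc R1)
  ultimately show ?thesis unfolding disjoint_def by simp
qed

lemma pw_pair: "f \<in> Arr X \<Longrightarrow> g \<in> Arr X \<Longrightarrow> Dom X f = Dom X g \<Longrightarrow>
   nowhere_defined X (Dom X f) (Dom X f) (rst f \<cdot> rst g) \<Longrightarrow> pw {f, g}"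
proof -
  assume a: "f \<in> Arr X" "g \<in> Arr X" "Dom X f = Dom X g" and z: "nowhere_defined X (Dom X f) (Dom X f) (rst f \<cdot> rst g)"
  have "disjoint X f g" using disj_of_nd a z by blast
  moreover have "disjoint X g f" using disj_of_nd[of g f] a z R2[of f g] by simp
  ultimately show ?thesis unfolding pw_def by auto
qed

lemma rst_join:
  assumes j: "is_join X A B {f, g} j" and f: "f \<in> hom X A B" and g: "g \<in> hom X A B"
    and z: "nowhere_defined X A A (rst f \<cdot> rst g)"
  shows "is_join X A A {rst f, rst g} (rst j)"
proof -
  have ft: "f \<in> Arr X" "Dom X f = A" "Cod X f = B" and gt: "g \<in> Arr X" "Dom X g = A" "Cod X g = B"
    using f g unfolding hom_def by auto
  have jt: "j \<in> Arr X" "Dom X j = A" "Cod X j = B" using j unfolding is_join_def hom_def by auto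
  have AB: "A \<in> Obj X" "B \<in> Obj X" using ft by auto
  have fj: "rst f \<cdot> j = f" and gj: "rst g \<cdot> j = g" using j unfolding is_join_def rle_def by auto
  have pwr: "pw {rst f, rst g}" using pw_pair[of "rst f" "rst g"] ft gt z by simp
  have Fh: "{rst f, rst g} \<subseteq> hom X A A" using ft gt unfolding hom_def by auto
  obtain J where J: "is_join X A A {rst f, rst g} J" using join_ex[OF AB(1) AB(1) Fh _ pwr] by auto
  have Jt: "J \<in> Arr X" "Dom X J = A" "Cod X J = A" using J unfolding is_join_def hom_def by auto
  have "is_join X A B ((\<lambda>x. Id X A \<cdot> x \<cdot> j) ` {rst f, rst g}) (Id X A \<cdot> J \<cdot> j)"
    using join_pres[OF AB(1) AB(1) Fh _ pwr J, of "Id X A" A j B] AB jt unfolding hom_def by simp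
  moreover have "(\<lambda>x. Id X A \<cdot> x \<cdot> j) ` {rst f, rst g} = {f, g}" using fj gj ft gt by (simp add: idl)
  moreover have "Id X A \<cdot> J \<cdot> j = J \<cdot> j" using Jt by (simp add: idl)
  ultimately have "is_join X A B {f, g} (J \<cdot> j)" by simp
  then have Jj: "J \<cdot> j = j" using j join_unique by blast
  have ub0: "\<forall>x\<in>{rst f, rst g}. rle X x (Id X A)" using ft gt AB by (auto simp: rle_def idr)
  have "Id X A \<in> hom X A A" using AB unfolding hom_def by simp
  then have "rle X J (Id X A)" using J ub0 unfolding is_join_def by blast
  then have rJ: "rst J = J" unfolding rle_def using AB Jt by (simp add: idr)
  have rj1: "rst j = J \<cdot> rst j"
  proof -
    have "rst j = rst (rst J \<cdot> j)" using Jj rJ by simp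
    also have "\<dots> = J \<cdot> rst j" using R3[of J j] Jt jt rJ by simp
    finally show ?thesis .
  qed
  have ub: "\<forall>x\<in>{rst f, rst g}. rle X x (rst j)"
  proof -
    have "rst f \<cdot> rst j = rst f" using R3[of f j] ft jt fj by simp
    moreover have "rst g \<cdot> rst j = rst g" using R3[of g j] gt jt gj by simp
    ultimately show ?thesis using ft gt jt unfolding rle_def by auto
  qed
  have "rle X J (rst j)" using J ub jt unfolding is_join_def hom_def by auto
  then have "J \<cdot> rst j = J" unfolding rle_def using rJ by simp
  then have "rst j = J" using rj1 by simp
  then show ?thesis using J by simp
qed

theorem main_loc:
  assumes G: "\<Gamma> \<in> Obj X" and U: "U \<in> Obj X" and T: "T \<in> Obj X"
    and bT: "bT \<in> hom X (Prod X \<Gamma> U) (Term X)" and bF: "bF \<in> hom X (Prod X \<Gamma> U) (Term X)"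
    and z: "nowhere_defined X (Prod X \<Gamma> U) (Prod X \<Gamma> U) (Comp X (Rst X bT) (Rst X bF))"
    and m: "m \<in> hom X (Prod X \<Gamma> U) T" and n: "n \<in> hom X (Prod X \<Gamma> U) T"
    and a: "a \<in> hom X \<Gamma> U" and v: "v \<in> hom X \<Gamma> T"
  shows "Comp X (Comp X (Pair X (Pair X (Id X \<Gamma>) a) v)
                  (RD X (join2 X (Comp X (Rst X bT) m) (Comp X (Rst X bF) n))))
                (P1 X \<Gamma> U)
       = join2 X
           (Comp X (Rst X (Comp X (Pair X (Id X \<Gamma>) a) bT))
              (Comp X (Comp X (Pair X (Pair X (Id X \<Gamma>) a) v) (RD X m)) (P1 X \<Gamma> U)))
           (Comp X (Rst X (Comp X (Pair X (Id X \<Gamma>) a) bF))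
              (Comp X (Comp X (Pair X (Pair X (Id X \<Gamma>) a) v) (RD X n)) (P1 X \<Gamma> U)))"
proof -
  let ?P = "Prod X \<Gamma> U"
  let ?s = "Pair X (Id X \<Gamma>) a"
  let ?e = "Pair X ?s v"
  let ?\<pi> = "P1 X \<Gamma> U"
  let ?f1 = "rst bT \<cdot> m" and ?f2 = "rst bF \<cdot> n"
  have bTt: "bT \<in> Arr X" "Dom X bT = ?P" "Cod X bT = Term X" using bT unfolding hom_def by auto
  have bFt: "bF \<in> Arr X" "Dom X bF = ?P" "Cod X bF = Term X" using bF unfolding hom_def by auto
  have mt: "m \<in> Arr X" "Dom X m = ?P" "Cod X m = T" using m unfolding hom_def by auto
  have nt: "n \<in> Arr X" "Dom X n = ?P" "Cod X n = T" using n unfolding hom_def by auto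
  have at: "a \<in> Arr X" "Dom X a = \<Gamma>" "Cod X a = U" using a unfolding hom_def by auto
  have vt: "v \<in> Arr X" "Dom X v = \<Gamma>" "Cod X v = T" using v unfolding hom_def by auto
  note ty = G U T bTt bFt mt nt at vt
  have st: "?s \<in> Arr X" "Dom X ?s = \<Gamma>" "Cod X ?s = ?P" using ty by simp_all
  have f1t: "?f1 \<in> Arr X" "Dom X ?f1 = ?P" "Cod X ?f1 = T" using ty by simp_all
  have f2t: "?f2 \<in> Arr X" "Dom X ?f2 = ?P" "Cod X ?f2 = T" using ty by simp_all
  have PO: "?P \<in> Obj X" using ty by simp
  have nd12: "nowhere_defined X ?P ?P (rst ?f1 \<cdot> rst ?f2)"
  proof -
    have "rst ?f1 \<cdot> rst ?f2 = rst bT \<cdot> rst m \<cdot> (rst bF \<cdot> rst n)" using ty R3[of bT m] R3[of bF n] by simp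
    also have "\<dots> = rst bT \<cdot> (rst m \<cdot> rst bF) \<cdot> rst n" using ty by (simp add: assoc)
    also have "\<dots> = rst bT \<cdot> (rst bF \<cdot> rst m) \<cdot> rst n" using ty R2[of m bF] by simp
    also have "\<dots> = Id X ?P \<cdot> (rst bT \<cdot> rst bF) \<cdot> (rst m \<cdot> rst n)" using ty by (simp add: assoc idl)
    finally have e: "rst ?f1 \<cdot> rst ?f2 = Id X ?P \<cdot> (rst bT \<cdot> rst bF) \<cdot> (rst m \<cdot> rst n)" .
    show ?thesis unfolding e by (rule nd_comp[OF z]) (use ty in \<open>simp_all add: hom_def\<close>)
  qed
  have pw12: "pw {?f1, ?f2}" using pw_pair[of ?f1 ?f2] f1t f2t nd12 by simp
  have F12: "{?f1, ?f2} \<subseteq> hom X ?P T" using f1t f2t unfolding hom_def by auto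
  obtain j where j: "is_join X ?P T {?f1, ?f2} j" using join_ex[OF PO T F12 _ pw12] by auto
  have jt: "j \<in> Arr X" "Dom X j = ?P" "Cod X j = T" using j unfolding is_join_def hom_def by auto
  have jj: "join2 X ?f1 ?f2 = j" using join2_eq[of ?f1 ?f2 j] j f1t by simp
  have f1j: "rst ?f1 \<cdot> j = ?f1" and f2j: "rst ?f2 \<cdot> j = ?f2" using j unfolding is_join_def rle_def by auto
  have sj0: "is_join X \<Gamma> T ((\<lambda>x. ?s \<cdot> x \<cdot> Id X T) ` {?f1, ?f2}) (?s \<cdot> j \<cdot> Id X T)"
    by (rule join_pres[OF PO T F12 _ pw12 j]) (use ty st in \<open>simp_all add: hom_def\<close>)
  have sj: "is_join X \<Gamma> T {?s \<cdot> ?f1, ?s \<cdot> ?f2} (?s \<cdot> j)"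
    using sj0 ty st f1t f2t jt by (simp add: idr)
  have disj12: "nowhere_defined X ?P T (rst ?f1 \<cdot> ?f2)"
    using pw12 unfolding pw_def disjoint_def
  proof -
    have "rst ?f1 \<cdot> ?f2 = rst ?f1 \<cdot> rst ?f2 \<cdot> ?f2" using f1t f2t by (simp add: assoc R1)
    also have "\<dots> = Id X ?P \<cdot> (rst ?f1 \<cdot> rst ?f2) \<cdot> ?f2" using f1t f2t PO by (simp add: idl)
    finally have e: "rst ?f1 \<cdot> ?f2 = Id X ?P \<cdot> (rst ?f1 \<cdot> rst ?f2) \<cdot> ?f2" .
    show ?thesis unfolding e by (rule nd_comp[OF nd12]) (use f1t f2t PO in \<open>simp_all add: hom_def\<close>)
  qed
  have ndS: "nowhere_defined X \<Gamma> \<Gamma> (rst (?s \<cdot> ?f1) \<cdot> rst (?s \<cdot> ?f2))"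
  proof -
    have "rst (?s \<cdot> ?f1) \<cdot> rst (?s \<cdot> ?f2) = rst (rst (?s \<cdot> ?f1) \<cdot> (?s \<cdot> ?f2))"
      using st f1t f2t R3[of "?s \<cdot> ?f1" "?s \<cdot> ?f2"] by simp
    also have "\<dots> = rst ((rst (?s \<cdot> ?f1) \<cdot> ?s) \<cdot> ?f2)" using st f1t f2t by (simp add: assoc)
    also have "\<dots> = rst ((?s \<cdot> rst ?f1) \<cdot> ?f2)" using st f1t f2t R4[of ?s ?f1] by simp
    also have "\<dots> = rst (?s \<cdot> (rst ?f1 \<cdot> ?f2) \<cdot> Id X T)" using st f1t f2t ty by (simp add: assoc idr)
    finally have e: "rst (?s \<cdot> ?f1) \<cdot> rst (?s \<cdot> ?f2) = rst (?s \<cdot> (rst ?f1 \<cdot> ?f2) \<cdot> Id X T)" .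
    have "nowhere_defined X \<Gamma> T (?s \<cdot> (rst ?f1 \<cdot> ?f2) \<cdot> Id X T)"
      by (rule nd_comp[OF disj12]) (use st ty in \<open>simp_all add: hom_def\<close>)
    then show ?thesis unfolding e by (rule nd_rst)
  qed
  have sf1h: "?s \<cdot> ?f1 \<in> hom X \<Gamma> T" and sf2h: "?s \<cdot> ?f2 \<in> hom X \<Gamma> T"
    using st f1t f2t unfolding hom_def by auto
  have K: "is_join X \<Gamma> \<Gamma> {rst (?s \<cdot> ?f1), rst (?s \<cdot> ?f2)} (rst (?s \<cdot> j))"
    by (rule rst_join[OF sj sf1h sf2h ndS])
  let ?L = "?e \<cdot> RD X j \<cdot> ?\<pi>"
  have Lt: "?L \<in> Arr X" "Dom X ?L = \<Gamma>" "Cod X ?L = U" using st jt ty by simp_all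
  have eK: "?e \<cdot> RD X j = rst (?s \<cdot> j) \<cdot> (?e \<cdot> RD X j)"
    using e_RD_rst[of ?s v j j] st jt ty R1[of j] by simp
  have LK: "?L = rst (?s \<cdot> j) \<cdot> ?L"
  proof -
    have "rst (?s \<cdot> j) \<cdot> ?L = rst (?s \<cdot> j) \<cdot> (?e \<cdot> RD X j) \<cdot> ?\<pi>" using st jt ty by (simp add: assoc)
    then show ?thesis using eK by simp
  qed
  have pwK: "pw {rst (?s \<cdot> ?f1), rst (?s \<cdot> ?f2)}"
    using pw_pair[of "rst (?s \<cdot> ?f1)" "rst (?s \<cdot> ?f2)"] st f1t f2t ndS by simp
  have FK: "{rst (?s \<cdot> ?f1), rst (?s \<cdot> ?f2)} \<subseteq> hom X \<Gamma> \<Gamma>" using st f1t f2t unfolding hom_def by auto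
  have L0: "is_join X \<Gamma> U ((\<lambda>x. Id X \<Gamma> \<cdot> x \<cdot> ?L) ` {rst (?s \<cdot> ?f1), rst (?s \<cdot> ?f2)}) (Id X \<Gamma> \<cdot> rst (?s \<cdot> j) \<cdot> ?L)"
    by (rule join_pres[OF G G FK _ pwK K]) (use Lt G in \<open>simp_all add: hom_def\<close>)
  have comp_i: "rst (?s \<cdot> c) \<cdot> ?L = rst (?s \<cdot> b) \<cdot> (?e \<cdot> RD X mm \<cdot> ?\<pi>)"
    if c: "c = rst b \<cdot> mm" "rst c \<cdot> j = c" and b: "b \<in> Arr X" "Dom X b = ?P" and mm: "mm \<in> Arr X" "Dom X mm = ?P" "Cod X mm = T"
    for c b mm
  proof -
    have ct: "c \<in> Arr X" "Dom X c = ?P" "Cod X c = T" using c b mm by simp_all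
    have "rst (?s \<cdot> c) \<cdot> ?L = rst (?s \<cdot> c) \<cdot> (?e \<cdot> RD X j) \<cdot> ?\<pi>" using st jt ty ct by (simp add: assoc)
    also have "rst (?s \<cdot> c) \<cdot> (?e \<cdot> RD X j) = ?e \<cdot> RD X (rst c \<cdot> j)"
      using e_RD_rst[of ?s v c j] st jt ty ct by simp
    also have "rst c \<cdot> j = c" by (rule c(2))
    also have "?e \<cdot> RD X c = rst (?s \<cdot> b) \<cdot> (?e \<cdot> RD X mm)"
      using e_RD_rst[of ?s v b mm] st ty b mm c(1) by simp
    also have "rst (?s \<cdot> b) \<cdot> (?e \<cdot> RD X mm) \<cdot> ?\<pi> = rst (?s \<cdot> b) \<cdot> (?e \<cdot> RD X mm \<cdot> ?\<pi>)"
      using st ty b mm by (simp add: assoc)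
    finally show ?thesis .
  qed
  have c1: "rst (?s \<cdot> ?f1) \<cdot> ?L = rst (?s \<cdot> bT) \<cdot> (?e \<cdot> RD X m \<cdot> ?\<pi>)"
    by (rule comp_i) (use f1j ty in simp_all)
  have c2: "rst (?s \<cdot> ?f2) \<cdot> ?L = rst (?s \<cdot> bF) \<cdot> (?e \<cdot> RD X n \<cdot> ?\<pi>)"
    by (rule comp_i) (use f2j ty in simp_all)
  have img: "(\<lambda>x. Id X \<Gamma> \<cdot> x \<cdot> ?L) ` {rst (?s \<cdot> ?f1), rst (?s \<cdot> ?f2)} =
     {rst (?s \<cdot> bT) \<cdot> (?e \<cdot> RD X m \<cdot> ?\<pi>), rst (?s \<cdot> bF) \<cdot> (?e \<cdot> RD X n \<cdot> ?\<pi>)}"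
    using c1 c2 st f1t f2t G by (simp add: idl)
  have "Id X \<Gamma> \<cdot> rst (?s \<cdot> j) \<cdot> ?L = ?L" using LK st jt G by (simp add: idl)
  then have Lj: "is_join X \<Gamma> U {rst (?s \<cdot> bT) \<cdot> (?e \<cdot> RD X m \<cdot> ?\<pi>), rst (?s \<cdot> bF) \<cdot> (?e \<cdot> RD X n \<cdot> ?\<pi>)} ?L"
    using L0 img by simp
  have "join2 X (rst (?s \<cdot> bT) \<cdot> (?e \<cdot> RD X m \<cdot> ?\<pi>)) (rst (?s \<cdot> bF) \<cdot> (?e \<cdot> RD X n \<cdot> ?\<pi>)) = ?L"
    by (rule join2_eq) (use Lj st ty in simp)
  then show ?thesis using jj by simp
qed
end
theorem mainTheorem3:
  fixes X :: "('o, 'a) rdrc"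
    and \<Gamma> U T :: 'o and bT bF m n a v :: 'a
  assumes "is_basic_RDRC X"
    and "has_countable_disjoint_joins X"
    and "\<Gamma> \<in> Obj X" and "U \<in> Obj X" and "T \<in> Obj X"
    and "bT \<in> hom X (Prod X \<Gamma> U) (Term X)" and "bF \<in> hom X (Prod X \<Gamma> U) (Term X)"
    and "nowhere_defined X (Prod X \<Gamma> U) (Prod X \<Gamma> U) (Comp X (Rst X bT) (Rst X bF))"
    and "m \<in> hom X (Prod X \<Gamma> U) T" and "n \<in> hom X (Prod X \<Gamma> U) T"
    and "a \<in> hom X \<Gamma> U" and "v \<in> hom X \<Gamma> T"
  shows "Comp X (Comp X (Pair X (Pair X (Id X \<Gamma>) a) v)
                  (RD X (join2 X (Comp X (Rst X bT) m) (Comp X (Rst X bF) n))))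
                (P1 X \<Gamma> U)
       = join2 X
           (Comp X (Rst X (Comp X (Pair X (Id X \<Gamma>) a) bT))
              (Comp X (Comp X (Pair X (Pair X (Id X \<Gamma>) a) v) (RD X m)) (P1 X \<Gamma> U)))
           (Comp X (Rst X (Comp X (Pair X (Id X \<Gamma>) a) bF))
              (Comp X (Comp X (Pair X (Pair X (Id X \<Gamma>) a) v) (RD X n)) (P1 X \<Gamma> U)))"
proof -
  interpret ctx X using assms(1,2) by unfold_locales
  show ?thesis by (rule main_loc[OF assms(3-12)])
qed

end
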